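(* Let $\mathfrak S=(S,\xrightarrow{F},\le)$ be an $\infty$-effective complete WSTS and $s_0\in S$. If the procedure $\mathbf{Clover}_{\mathfrak S}$ terminates on input $s_0$, then it returns $Clover_{\mathfrak S}(s_0)$.
   Context: A complete WSTS is a functional transition system $(S,\xrightarrow{F},\le)$ ($F$ finite set of partial maps, $s\to f(s)$ for $s\in\operatorname{dom}f$) where $(S,\le)$ is a partial order which is well (well-founded, no infinite antichain), a dcpo (every directed subset $D$ has a lub $\bigvee D$), and continuous (for every $x$, $\{y\mid y\ll x\}$ is directed with lub $x$, where $y\ll x$ iff every directed $D$ with $x\le\bigvee D$ contains an element above $y$), and each $f\in F$ is partial continuous: $\operatorname{dom}f$ is Scott-open (upward-closed and any directed $D$ with $\bigvee D$ in it meets it) and $f(\bigvee D)=\bigvee f(D)$ for directed $D\subseteq\operatorname{dom}f$. $Post(A)$: one-step successors; $Post^*$: reflexive-transitive closure; $Cover_{\mathfrak S}(s)=\downarrow Post^*(\downarrow s)$; $\operatorname{Lub}(E)=\{\bigvee D\mid D\subseteq E\text{ directed}\}$; $Clover_{\mathfrak S}(s)=\operatorname{Max}\operatorname{Lub}(Cover_{\mathfrak S}(s))$ (maximal elements). $F^*$: finite compositions of maps in $F$. Lub-acceleration: $\operatorname{dom}g^\infty=\operatorname{dom}g$; $g^\infty(x)=\bigvee_n g^n(x)$ if $x<g(x)$, else $g(x)$. $\infty$-effective: states finitely coded, $\le$ decidable, each $f\in F$ computable with decidable domain, and $g^\infty$ computable for each $g\in F^*$. Procedure $\mathbf{Clover}_{\mathfrak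 S}(s_0)$: 1. $A\leftarrow\{s_0\}$; 2. while $Post(A)\not\le^\flat A$ do (a) choose fairly $(g,a)\in F^*\times A$ with $a\in\operatorname{dom}g$; (b) $A\leftarrow A\cup\{g^\infty(a)\}$; 3. return $\operatorname{Max}A$. Here $B\le^\flat C$ iff $\downarrow B\subseteq\downarrow C$. Fairness: on every infinite execution, every pair $(g,a)\in F^*\times A_m$ (with $A_m$ the value of $A$ after $m$ iterations, $a\in\operatorname{dom}g$) is picked at some later stage. *)

theory Defs
  imports Main
begin

definition directed :: "('s::order) set \<Rightarrow> bool" where
  "directed D \<longleftrightarrow> D \<noteq> {} \<and> (\<forall>x\<in>D. \<forall>y\<in>D. \<exists>z\<in>D. x \<le> z \<and> y \<le> z)"

definition is_lub :: "('s::order) set \<Rightarrow> 's \<Rightarrow> bool" where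
  "is_lub D x \<longleftrightarrow> (\<forall>d\<in>D. d \<le> x) \<and> (\<forall>u. (\<forall>d\<in>D. d \<le> u) \<longrightarrow> x \<le> u)"

definition lub :: "('s::order) set \<Rightarrow> 's" where
  "lub D = (THE x. is_lub D x)"

definition well_po :: "'s::order itself \<Rightarrow> bool" where
  "well_po _ \<longleftrightarrow> wfP ((<) :: 's \<Rightarrow> 's \<Rightarrow> bool) \<and>
     (\<forall>A::'s set. (\<forall>x\<in>A. \<forall>y\<in>A. x \<noteq> y \<longrightarrow> \<not> x \<le> y \<and> \<not> y \<le> x) \<longrightarrow> finite A)"

definition dcpo :: "'s::order itself \<Rightarrow> bool" where
  "dcpo _ \<longleftrightarrow> (\<forall>D::'s set. directed D \<longrightarrow> (\<exists>x. is_lub D x))"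

definition way_below :: "('s::order) \<Rightarrow> 's \<Rightarrow> bool" where
  "way_below y x \<longleftrightarrow> (\<forall>D. directed D \<longrightarrow> x \<le> lub D \<longrightarrow> (\<exists>d\<in>D. y \<le> d))"

definition continuous_po :: "'s::order itself \<Rightarrow> bool" where
  "continuous_po _ \<longleftrightarrow> (\<forall>x::'s. directed {y. way_below y x} \<and> is_lub {y. way_below y x} x)"

definition scott_open :: "('s::order) set \<Rightarrow> bool" where
  "scott_open U \<longleftrightarrow> (\<forall>x y. x \<in> U \<longrightarrow> x \<le> y \<longrightarrow> y \<in> U) \<and>
     (\<forall>D. directed D \<longrightarrow> lub D \<in> U \<longrightarrow> D \<inter> U \<noteq> {})"

definition partial_continuous :: "(('s::order) \<Rightarrow> 's option) \<Rightarrow> bool" where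
  "partial_continuous f \<longleftrightarrow> scott_open (dom f) \<and>
     (\<forall>D. directed D \<longrightarrow> D \<subseteq> dom f \<longrightarrow> is_lub (the ` f ` D) (the (f (lub D))))"

definition complete_wsts :: "(('s::order) \<Rightarrow> 's option) set \<Rightarrow> bool" where
  "complete_wsts F \<longleftrightarrow> finite F \<and> well_po TYPE('s) \<and> dcpo TYPE('s) \<and> continuous_po TYPE('s) \<and>
     (\<forall>f\<in>F. partial_continuous f)"

definition Post :: "('s \<Rightarrow> 's option) set \<Rightarrow> 's set \<Rightarrow> 's set" where
  "Post F A = {y. \<exists>f\<in>F. \<exists>a\<in>A. f a = Some y}"

inductive_set Post_star :: "('s \<Rightarrow> 's option) set \<Rightarrow> 's set \<Rightarrow> 's set"
  for F :: "('s \<Rightarrow> 's option) set" and A :: "'s set" where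
  base: "a \<in> A \<Longrightarrow> a \<in> Post_star F A"
| step: "x \<in> Post_star F A \<Longrightarrow> f \<in> F \<Longrightarrow> f x = Some y \<Longrightarrow> y \<in> Post_star F A"

definition down :: "('s::order) set \<Rightarrow> 's set" where
  "down A = {x. \<exists>a\<in>A. x \<le> a}"

definition le_flat :: "('s::order) set \<Rightarrow> 's set \<Rightarrow> bool" where
  "le_flat B C \<longleftrightarrow> down B \<subseteq> down C"

definition Cover :: "(('s::order) \<Rightarrow> 's option) set \<Rightarrow> 's \<Rightarrow> 's set" where
  "Cover F s = down (Post_star F (down {s}))"

definition Lub :: "('s::order) set \<Rightarrow> 's set" where
  "Lub E = {lub D | D. D \<subseteq> E \<and> directed D}"

definition maximal :: "('s::order) set \<Rightarrow> 's set" where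
  "maximal A = {x\<in>A. \<forall>y\<in>A. x \<le> y \<longrightarrow> y = x}"

definition Clover :: "(('s::order) \<Rightarrow> 's option) set \<Rightarrow> 's \<Rightarrow> 's set" where
  "Clover F s = maximal (Lub (Cover F s))"

definition Fstar :: "('s \<Rightarrow> 's option) set \<Rightarrow> ('s \<Rightarrow> 's option) set" where
  "Fstar F = {foldr (\<lambda>f g. f \<circ>\<^sub>m g) fs Some | fs. set fs \<subseteq> F}"

primrec piter :: "('s \<Rightarrow> 's option) \<Rightarrow> nat \<Rightarrow> 's \<Rightarrow> 's option" where
  "piter g 0 x = Some x"
| "piter g (Suc n) x = Option.bind (piter g n x) g"

definition accel :: "(('s::order) \<Rightarrow> 's option) \<Rightarrow> 's \<Rightarrow> 's option" where
  "accel g x = (case g x of None \<Rightarrow> None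
     | Some y \<Rightarrow> if x < y then Some (lub {z. \<exists>n. piter g n x = Some z}) else Some y)"

text \<open>A terminating execution of procedure Clover(s0) of n loop iterations:
  A i is the value of the variable A after i iterations; the loop guard holds
  before each of the n iterations and fails after the last one; the returned
  value is maximal (A n).\<close>

definition terminating_run ::
  "(('s::order) \<Rightarrow> 's option) set \<Rightarrow> 's \<Rightarrow> (nat \<Rightarrow> 's set) \<Rightarrow> nat \<Rightarrow> bool" where
  "terminating_run F s0 A n \<longleftrightarrow> A 0 = {s0} \<and>
     (\<forall>i<n. \<not> le_flat (Post F (A i)) (A i) \<and>
        (\<exists>g\<in>Fstar F. \<exists>a\<in>A i. a \<in> dom g \<and> A (Suc i) = A i \<union> {the (accel g a)})) \<and>
     le_flat (Post F (A n)) (A n)"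

end

theory Submission
  imports Defs
begin

lemma lub_unique: "is_lub D (x::'s::order) \<Longrightarrow> lub D = x"
  unfolding lub_def
  apply (rule the_equality, assumption)
  by (meson antisym is_lub_def)

lemma dcpo_lub: "dcpo TYPE('s::order) \<Longrightarrow> directed (D::'s set) \<Longrightarrow> is_lub D (lub D)"
  unfolding dcpo_def using lub_unique by metis

lemma pc_mono:
  assumes "partial_continuous f" "f x = Some y" "x \<le> x'"
  shows "\<exists>y'. f x' = Some y' \<and> y \<le> y'"
proof -
  have so: "scott_open (dom f)" and c: "\<And>D. directed D \<Longrightarrow> D \<subseteq> dom f \<Longrightarrow> is_lub (the ` f ` D) (the (f (lub D)))"
    using assms(1) unfolding partial_continuous_def by auto
  have "x' \<in> dom f" using so assms(2,3) unfolding scott_open_def by blast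
  then obtain y' where y': "f x' = Some y'" by blast
  have d: "directed {x, x'}" unfolding directed_def using assms(3) by auto
  have "is_lub {x,x'} x'" unfolding is_lub_def using assms(3) by auto
  hence "lub {x,x'} = x'" by (rule lub_unique)
  with c[OF d] have "is_lub (the ` f ` {x,x'}) y'" using y' assms(2) by auto
  hence "y \<le> y'" using assms(2) unfolding is_lub_def by auto
  with y' show ?thesis by blast
qed

lemma wb_up: "way_below y x \<Longrightarrow> x \<le> x' \<Longrightarrow> way_below y x'"
  unfolding way_below_def by (meson order_trans)

lemma Lub_Lub:
  assumes dc: "dcpo TYPE('s::order)" and cp: "continuous_po TYPE('s)"
    and E: "\<And>x y. x \<in> E \<Longrightarrow> (y::'s) \<le> x \<Longrightarrow> y \<in> E"
    and X: "X \<subseteq> Lub E" "directed X"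
  shows "lub X \<in> Lub E"
proof -
  have cpx: "\<And>x::'s. directed {y. way_below y x} \<and> is_lub {y. way_below y x} x"
    using cp unfolding continuous_po_def by blast
  define W where "W = {y. \<exists>x\<in>X. way_below y x}"
  have WE: "W \<subseteq> E"
  proof
    fix y assume "y \<in> W"
    then obtain x where x: "x \<in> X" "way_below y x" unfolding W_def by blast
    then obtain D where D: "D \<subseteq> E" "directed D" "x = lub D" using X unfolding Lub_def by blast
    then obtain d where "d \<in> D" "y \<le> d" using x(2) unfolding way_below_def by blast
    thus "y \<in> E" using D E by blast
  qed
  have Wd: "directed W"
    unfolding directed_def
  proof safe
    obtain x where "x \<in> X" using X(2) unfolding directed_def by blast
    moreover obtain y where "way_below y x" using cpx[of x] unfolding directed_def by blast
    ultimately show "W = {} \<Longrightarrow> False" unfolding W_def by blast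
  next
    fix y1 y2 assume "y1 \<in> W" "y2 \<in> W"
    then obtain x1 x2 where "x1 \<in> X" "way_below y1 x1" "x2 \<in> X" "way_below y2 x2"
      unfolding W_def by blast
    moreover then obtain x where "x \<in> X" "x1 \<le> x" "x2 \<le> x" using X(2) unfolding directed_def by blast
    ultimately have "way_below y1 x" "way_below y2 x" using wb_up by blast+
    then obtain z where "way_below z x" "y1 \<le> z" "y2 \<le> z"
      using cpx[of x] unfolding directed_def by blast
    thus "\<exists>z\<in>W. y1 \<le> z \<and> y2 \<le> z" using \<open>x \<in> X\<close> unfolding W_def by blast
  qed
  have lX: "is_lub X (lub X)" using dcpo_lub[OF dc X(2)] .
  have "is_lub W (lub X)"
    unfolding is_lub_def
  proof safe
    fix d assume "d \<in> W"
    then obtain x where "x \<in> X" "way_below d x" unfolding W_def by blast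
    hence "d \<le> x" using cpx[of x] unfolding is_lub_def by blast
    thus "d \<le> lub X" using lX \<open>x \<in> X\<close> unfolding is_lub_def by (meson order_trans)
  next
    fix u assume u: "\<forall>d\<in>W. d \<le> u"
    have "\<forall>x\<in>X. x \<le> u"
    proof
      fix x assume "x \<in> X"
      hence "\<forall>d\<in>{y. way_below y x}. d \<le> u" using u unfolding W_def by blast
      thus "x \<le> u" using cpx[of x] unfolding is_lub_def by blast
    qed
    thus "lub X \<le> u" using lX unfolding is_lub_def by blast
  qed
  hence "lub W = lub X" by (rule lub_unique)
  thus ?thesis using WE Wd unfolding Lub_def by (metis (mono_tags, lifting) mem_Collect_eq)
qed

lemma Lub_self: "x \<in> E \<Longrightarrow> (x::'s::order) \<in> Lub E"
proof -
  assume "x \<in> E"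
  have "is_lub {x} x" unfolding is_lub_def by auto
  hence "lub {x} = x" by (rule lub_unique)
  moreover have "directed {x}" unfolding directed_def by auto
  ultimately show ?thesis using \<open>x \<in> E\<close> unfolding Lub_def by force
qed

context
  fixes F :: "(('s::order) \<Rightarrow> 's option) set" and s0 :: 's
  assumes cw: "complete_wsts F"
begin

lemma dc: "dcpo TYPE('s)" using cw unfolding complete_wsts_def by blast
lemma cp: "continuous_po TYPE('s)" using cw unfolding complete_wsts_def by blast
lemma pcF: "f \<in> F \<Longrightarrow> partial_continuous f" using cw unfolding complete_wsts_def by blast

lemma Cover_down: "x \<in> Cover F s0 \<Longrightarrow> y \<le> x \<Longrightarrow> y \<in> Cover F s0"
  unfolding Cover_def down_def by (auto intro: order_trans)

lemma Cover_s0: "s0 \<in> Cover F s0"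
  unfolding Cover_def down_def by (auto intro: Post_star.base)

lemma Cover_step: "f \<in> F \<Longrightarrow> x \<in> Cover F s0 \<Longrightarrow> f x = Some y \<Longrightarrow> y \<in> Cover F s0"
proof -
  assume f: "f \<in> F" and x: "x \<in> Cover F s0" and y: "f x = Some y"
  then obtain p where p: "p \<in> Post_star F (down {s0})" "x \<le> p" unfolding Cover_def down_def by blast
  obtain y' where "f p = Some y'" "y \<le> y'" using pc_mono[OF pcF[OF f] y p(2)] by blast
  moreover have "y' \<in> Post_star F (down {s0})" using Post_star.step[OF p(1) f] calculation by blast
  ultimately show ?thesis unfolding Cover_def down_def by blast
qed

lemma Lub_step:
  assumes f: "f \<in> F" and x: "x \<in> Lub (Cover F s0)" and y: "f x = Some y"
  shows "y \<in> Lub (Cover F s0)"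
proof -
  obtain D where D: "D \<subseteq> Cover F s0" "directed D" "x = lub D" using x unfolding Lub_def by blast
  have pc: "partial_continuous f" using pcF[OF f] .
  have so: "scott_open (dom f)" and c: "\<And>D. directed D \<Longrightarrow> D \<subseteq> dom f \<Longrightarrow> is_lub (the ` f ` D) (the (f (lub D)))"
    using pc unfolding partial_continuous_def by auto
  define D' where "D' = D \<inter> dom f"
  have ne: "D' \<noteq> {}" using so D y unfolding scott_open_def D'_def by blast
  have up: "\<And>a b. a \<in> dom f \<Longrightarrow> a \<le> b \<Longrightarrow> b \<in> dom f" using so unfolding scott_open_def by blast
  have D'd: "directed D'" unfolding directed_def
  proof (intro conjI ne ballI)
    fix a b assume "a \<in> D'" "b \<in> D'"
    then obtain z where "z \<in> D" "a \<le> z" "b \<le> z" using D(2) unfolding directed_def D'_def by blast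
    thus "\<exists>z\<in>D'. a \<le> z \<and> b \<le> z" using up \<open>a \<in> D'\<close> unfolding D'_def by blast
  qed
  have lD: "is_lub D (lub D)" using dcpo_lub[OF dc D(2)] .
  have "is_lub D' (lub D)" unfolding is_lub_def
  proof safe
    fix d assume "d \<in> D'" thus "d \<le> lub D" using lD unfolding is_lub_def D'_def by blast
  next
    fix u assume u: "\<forall>d\<in>D'. d \<le> u"
    obtain d0 where d0: "d0 \<in> D'" using ne by blast
    have "\<forall>d\<in>D. d \<le> u"
    proof
      fix d assume "d \<in> D"
      then obtain z where "z \<in> D" "d \<le> z" "d0 \<le> z" using d0 D(2) unfolding directed_def D'_def by blast
      hence "z \<in> D'" using up d0 unfolding D'_def by blast
      thus "d \<le> u" using u \<open>d \<le> z\<close> by (meson order_trans)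
    qed
    thus "lub D \<le> u" using lD unfolding is_lub_def by blast
  qed
  hence lD': "lub D' = x" using D(3) lub_unique by metis
  have "is_lub (the ` f ` D') y" using c[OF D'd] lD' y unfolding D'_def by auto
  hence ly: "lub (the ` f ` D') = y" by (rule lub_unique)
  have sub: "the ` f ` D' \<subseteq> Cover F s0"
    using Cover_step[OF f] D(1) unfolding D'_def by auto
  have "directed (the ` f ` D')" unfolding directed_def
  proof (intro conjI ballI)
    show "the ` f ` D' \<noteq> {}" using ne by blast
  next
    fix a b assume "a \<in> the ` f ` D'" "b \<in> the ` f ` D'"
    then obtain a' b' where ab: "a' \<in> D'" "b' \<in> D'" "a = the (f a')" "b = the (f b')" by blast
    then obtain z where z: "z \<in> D'" "a' \<le> z" "b' \<le> z" using D'd unfolding directed_def by blast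
    obtain ya where "f a' = Some ya" using ab unfolding D'_def by blast
    with pc_mono[OF pc this z(2)] have "a \<le> the (f z)" using ab by auto
    moreover obtain yb where "f b' = Some yb" using ab unfolding D'_def by blast
    with pc_mono[OF pc this z(3)] have "b \<le> the (f z)" using ab by auto
    ultimately show "\<exists>z\<in>the ` f ` D'. a \<le> z \<and> b \<le> z" using z(1) by blast
  qed
  thus ?thesis using sub ly unfolding Lub_def by blast
qed

end


lemma directed_fin_ub:
  assumes "directed D" "finite B" "B \<subseteq> D"
  shows "\<exists>z\<in>D. \<forall>b\<in>B. b \<le> (z::'s::order)"
  using assms(2,3)
proof (induction B rule: finite_induct)
  case empty then show ?case using assms(1) unfolding directed_def by blast
next
  case (insert x B)
  then obtain z where "z \<in> D" "\<forall>b\<in>B. b \<le> z" by blast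
  moreover obtain w where "w \<in> D" "x \<le> w" "z \<le> w" using assms(1) insert.prems calculation(1)
    unfolding directed_def by blast
  ultimately show ?case by (metis insert_iff order_trans)
qed

lemma directed_fin_down:
  assumes "finite A" "directed D" "D \<subseteq> down A"
  shows "\<exists>a\<in>A. \<forall>d\<in>D. d \<le> (a::'s::order)"
proof (rule ccontr)
  assume "\<not> ?thesis"
  hence "\<forall>a\<in>A. \<exists>d\<in>D. \<not> d \<le> a" by blast
  then obtain h where h: "\<forall>a\<in>A. h a \<in> D \<and> \<not> h a \<le> a" by metis
  obtain z where z: "z \<in> D" "\<forall>b\<in>h ` A. b \<le> z"
    using directed_fin_ub[OF assms(2), of "h ` A"] assms(1) h by blast
  then obtain a where "a \<in> A" "z \<le> a" using assms(3) unfolding down_def by blast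
  thus False using h z by (meson imageI order_trans)
qed

lemma Fstar_props:
  assumes "set fs \<subseteq> F" "\<And>f x y x'. f \<in> F \<Longrightarrow> f x = Some y \<Longrightarrow> x \<le> x' \<Longrightarrow> \<exists>y'. f x' = Some y' \<and> y \<le> y'"
    "\<And>f x y. f \<in> F \<Longrightarrow> f x = Some y \<Longrightarrow> x \<in> L \<Longrightarrow> y \<in> L"
  shows "(\<forall>x y x'. foldr (\<lambda>f g. f \<circ>\<^sub>m g) fs Some x = Some y \<longrightarrow> x \<le> x' \<longrightarrow>
            (\<exists>y'. foldr (\<lambda>f g. f \<circ>\<^sub>m g) fs Some x' = Some y' \<and> y \<le> (y'::'s::order))) \<and>
         (\<forall>x y. foldr (\<lambda>f g. f \<circ>\<^sub>m g) fs Some x = Some y \<longrightarrow> x \<in> L \<longrightarrow> y \<in> L)"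
  using assms(1)
proof (induction fs)
  case Nil then show ?case by auto
next
  case (Cons f fs)
  hence IH: "\<forall>x y x'. foldr (\<lambda>f g. f \<circ>\<^sub>m g) fs Some x = Some y \<longrightarrow> x \<le> x' \<longrightarrow>
            (\<exists>y'. foldr (\<lambda>f g. f \<circ>\<^sub>m g) fs Some x' = Some y' \<and> y \<le> y')"
     "\<forall>x y. foldr (\<lambda>f g. f \<circ>\<^sub>m g) fs Some x = Some y \<longrightarrow> x \<in> L \<longrightarrow> y \<in> L"
    and f: "f \<in> F" by auto
  show ?case
  proof (intro conjI allI impI)
    fix x y x'
    assume a: "foldr (\<lambda>f g. f \<circ>\<^sub>m g) (f # fs) Some x = Some y" "x \<le> x'"
    then obtain m where m: "foldr (\<lambda>f g. f \<circ>\<^sub>m g) fs Some x = Some m" "f m = Some y"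
      by (auto simp: map_comp_def split: option.splits)
    then obtain m' where m': "foldr (\<lambda>f g. f \<circ>\<^sub>m g) fs Some x' = Some m'" "m \<le> m'" using IH(1) a(2) by blast
    then obtain y' where "f m' = Some y'" "y \<le> y'" using assms(2)[OF f m(2)] by blast
    thus "\<exists>y'. foldr (\<lambda>f g. f \<circ>\<^sub>m g) (f # fs) Some x' = Some y' \<and> y \<le> y'"
      using m' by (auto simp: map_comp_def)
  next
    fix x y
    assume a: "foldr (\<lambda>f g. f \<circ>\<^sub>m g) (f # fs) Some x = Some y" "x \<in> L"
    then obtain m where m: "foldr (\<lambda>f g. f \<circ>\<^sub>m g) fs Some x = Some m" "f m = Some y"
      by (auto simp: map_comp_def split: option.splits)
    thus "y \<in> L" using IH(2) assms(3)[OF f] a(2) by blast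
  qed
qed

context
  fixes F :: "(('s::order) \<Rightarrow> 's option) set" and s0 :: 's
  assumes cw: "complete_wsts F"
begin

lemma g_props:
  assumes "g \<in> Fstar F"
  shows "\<And>x y x'. g x = Some y \<Longrightarrow> x \<le> x' \<Longrightarrow> \<exists>y'. g x' = Some y' \<and> y \<le> y'"
    and "\<And>x y. g x = Some y \<Longrightarrow> x \<in> Lub (Cover F s0) \<Longrightarrow> y \<in> Lub (Cover F s0)"
proof -
  obtain fs where fs: "set fs \<subseteq> F" "g = foldr (\<lambda>f g. f \<circ>\<^sub>m g) fs Some"
    using assms unfolding Fstar_def by blast
  note P = Fstar_props[OF fs(1), of "Lub (Cover F s0)"]
  have "\<And>f x y x'. f \<in> F \<Longrightarrow> f x = Some y \<Longrightarrow> x \<le> x' \<Longrightarrow> \<exists>y'. f x' = Some y' \<and> y \<le> y'"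
    using pc_mono pcF[OF cw] by blast
  moreover have "\<And>f x y. f \<in> F \<Longrightarrow> f x = Some y \<Longrightarrow> x \<in> Lub (Cover F s0) \<Longrightarrow> y \<in> Lub (Cover F s0)"
    using Lub_step[OF cw] by blast
  ultimately have Q: "(\<forall>x y x'. g x = Some y \<longrightarrow> x \<le> x' \<longrightarrow> (\<exists>y'. g x' = Some y' \<and> y \<le> y')) \<and>
         (\<forall>x y. g x = Some y \<longrightarrow> x \<in> Lub (Cover F s0) \<longrightarrow> y \<in> Lub (Cover F s0))"
    using P fs(2) by blast
  show "\<And>x y x'. g x = Some y \<Longrightarrow> x \<le> x' \<Longrightarrow> \<exists>y'. g x' = Some y' \<and> y \<le> y'"
    using Q by blast
  show "\<And>x y. g x = Some y \<Longrightarrow> x \<in> Lub (Cover F s0) \<Longrightarrow> y \<in> Lub (Cover F s0)"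
    using Q by blast
qed

lemma accel_Lub:
  assumes g: "g \<in> Fstar F" and a: "a \<in> Lub (Cover F s0)" "a \<in> dom g"
  shows "the (accel g a) \<in> Lub (Cover F s0)"
proof -
  obtain y0 where y0: "g a = Some y0" using a(2) by blast
  show ?thesis
  proof (cases "a < y0")
    case False
    thus ?thesis using y0 g_props(2)[OF g y0 a(1)] unfolding accel_def by auto
  next
    case True
    have inv: "\<exists>x y. piter g n a = Some x \<and> g x = Some y \<and> x \<le> y \<and> x \<in> Lub (Cover F s0)" for n
    proof (induction n)
      case 0 then show ?case using y0 True a(1) by auto
    next
      case (Suc n)
      then obtain x y where xy: "piter g n a = Some x" "g x = Some y" "x \<le> y" "x \<in> Lub (Cover F s0)" by blast
      obtain y' where "g y = Some y'" "y \<le> y'" using g_props(1)[OF g xy(2,3)] by blast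
      moreover have "y \<in> Lub (Cover F s0)" using g_props(2)[OF g xy(2,4)] .
      ultimately show ?case using xy by auto
    qed
    define c where "c n = the (piter g n a)" for n
    have cS: "c n \<le> c (Suc n)" for n
      using inv[of n] unfolding c_def by auto
    have mono: "m \<le> n \<Longrightarrow> c m \<le> c n" for m n
      using lift_Suc_mono_le[of c, OF cS] by blast
    have C: "{z. \<exists>n. piter g n a = Some z} = range c"
    proof
      show "{z. \<exists>n. piter g n a = Some z} \<subseteq> range c" unfolding c_def by (auto intro: range_eqI[where x=n for n] simp: image_iff) (metis option.sel)
      show "range c \<subseteq> {z. \<exists>n. piter g n a = Some z}"
      proof
        fix z assume "z \<in> range c"
        then obtain n where "z = c n" by blast
        moreover obtain x where "piter g n a = Some x" using inv[of n] by blast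
        ultimately show "z \<in> {z. \<exists>n. piter g n a = Some z}" unfolding c_def by auto
      qed
    qed
    have dr: "directed (range c)" unfolding directed_def
    proof (intro conjI ballI)
      fix u v assume "u \<in> range c" "v \<in> range c"
      then obtain i j where "u = c i" "v = c j" by blast
      thus "\<exists>z\<in>range c. u \<le> z \<and> v \<le> z" using mono[of i "max i j"] mono[of j "max i j"] by auto
    qed auto
    have sub: "range c \<subseteq> Lub (Cover F s0)" unfolding c_def using inv by (metis image_subsetI option.sel)
    have "lub (range c) \<in> Lub (Cover F s0)"
      using Lub_Lub[OF dc[OF cw] cp[OF cw] _ sub dr] Cover_down[OF cw] by blast
    thus ?thesis using y0 True C unfolding accel_def by auto
  qed
qed

lemma run_inv:
  assumes r: "terminating_run F s0 A n"
  shows "i \<le> n \<Longrightarrow> finite (A i) \<and> s0 \<in> A i \<and> A i \<subseteq> Lub (Cover F s0)"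
proof (induction i)
  case 0 then show ?case using r Lub_self Cover_s0[OF cw] unfolding terminating_run_def by auto
next
  case (Suc i)
  then have IH: "finite (A i)" "s0 \<in> A i" "A i \<subseteq> Lub (Cover F s0)" and lt: "i < n" by auto
  then obtain g a where ga: "g \<in> Fstar F" "a \<in> A i" "a \<in> dom g" "A (Suc i) = A i \<union> {the (accel g a)}"
    using r unfolding terminating_run_def by blast
  have "the (accel g a) \<in> Lub (Cover F s0)" using accel_Lub[OF ga(1) _ ga(3)] IH(3) ga(2) by blast
  thus ?case using IH ga(4) by auto
qed

lemma Cover_sub:
  assumes r: "terminating_run F s0 A n"
  shows "Cover F s0 \<subseteq> down (A n)"
proof -
  have s0: "s0 \<in> A n" using conjunct1[OF conjunct2[OF run_inv[OF r order_refl]]] .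
  have pf0: "down (Post F (A n)) \<subseteq> down (A n)"
    using conjunct2[OF conjunct2[OF r[unfolded terminating_run_def]]] unfolding le_flat_def .
  have pf: "Post F (A n) \<subseteq> down (A n)"
  proof
    fix x assume "x \<in> Post F (A n)"
    hence "x \<in> down (Post F (A n))" unfolding down_def by blast
    thus "x \<in> down (A n)" using pf0 by blast
  qed
  have this_fact: "x \<in> down (A n)" if "x \<in> Post_star F (down {s0})" for x
    using that
  proof (induction rule: Post_star.induct)
    case (base a) then show ?case using s0 unfolding down_def by auto
  next
    case (step x f y)
    have fF: "f \<in> F" and fx: "f x = Some y" and xd: "x \<in> down (A n)" using step by auto
    obtain b where b: "b \<in> A n" "x \<le> b" using xd unfolding down_def by blast
    obtain y' where y': "f b = Some y'" "y \<le> y'" using pc_mono[OF pcF[OF cw fF] fx b(2)] by blast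
    hence "y' \<in> Post F (A n)" using b fF unfolding Post_def by blast
    hence "y' \<in> down (A n)" using pf by blast
    then obtain c where "c \<in> A n" "y' \<le> c" unfolding down_def by blast
    moreover have "y \<le> c" using order_trans[OF y'(2) calculation(2)] .
    ultimately show ?case unfolding down_def by blast
  qed
  show ?thesis
  proof
    fix x assume "x \<in> Cover F s0"
    then obtain p where p: "p \<in> Post_star F (down {s0})" "x \<le> p" unfolding Cover_def down_def by blast
    obtain b where "b \<in> A n" "p \<le> b" using this_fact[OF p(1)] unfolding down_def by blast
    moreover have "x \<le> b" using order_trans[OF p(2) calculation(2)] .
    ultimately show "x \<in> down (A n)" unfolding down_def by blast
  qed
qed

end

theorem theorem5p5:
  fixes F :: "(('s::order) \<Rightarrow> 's option) set" and s0 :: 's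
    and A :: "nat \<Rightarrow> 's set" and n :: nat
  assumes "complete_wsts F"
    and "terminating_run F s0 A n"
  shows "maximal (A n) = Clover F s0"
proof -
  let ?L = "Lub (Cover F s0)"
  have inv: "finite (A n)" "A n \<subseteq> ?L" using run_inv[OF assms(1,2), of n] by auto
  have Ld: "?L \<subseteq> down (A n)"
  proof
    fix x assume "x \<in> ?L"
    then obtain D where D: "D \<subseteq> Cover F s0" "directed D" "x = lub D" unfolding Lub_def by blast
    then obtain a where a: "a \<in> A n" "\<forall>d\<in>D. d \<le> a"
      using directed_fin_down[OF inv(1) D(2)] Cover_sub[OF assms(1,2)] by blast
    have "is_lub D x" using dcpo_lub[OF dc[OF assms(1)] D(2)] D(3) by simp
    hence "x \<le> a" using a unfolding is_lub_def by blast
    thus "x \<in> down (A n)" using a unfolding down_def by blast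
  qed
  show ?thesis unfolding Clover_def maximal_def
  proof safe
    fix x assume "x \<in> A n" thus "x \<in> ?L" using inv by blast
  next
    fix x y assume x: "x \<in> A n" "\<forall>y\<in>A n. x \<le> y \<longrightarrow> y = x" and y: "y \<in> ?L" "x \<le> y"
    then obtain a where a: "a \<in> A n" "y \<le> a" using Ld unfolding down_def by blast
    have "x \<le> a" using order_trans[OF y(2) a(2)] .
    hence "a = x" using x(2) a(1) by blast
    thus "y = x" using antisym[OF y(2)] a(2) by simp
  next
    fix x assume x: "x \<in> ?L" "\<forall>y\<in>?L. x \<le> y \<longrightarrow> y = x"
    then obtain a where a: "a \<in> A n" "x \<le> a" using Ld unfolding down_def by blast
    have "a \<in> ?L" using a(1) inv(2) by blast
    hence "a = x" using x(2) a(2) by blast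
    thus "x \<in> A n" using a(1) by simp
  next
    fix x y assume x: "x \<in> ?L" "\<forall>y\<in>?L. x \<le> y \<longrightarrow> y = x" "y \<in> A n" "x \<le> y"
    thus "y = x" using inv by blast
  qed
qed

end
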